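(* Let $T$ be a positive integer, $x \in \{0,1\}^T$, $p \in [0,1]^T$, and let $S \subset [0,1]$ be a finite set. Suppose $\mathcal{D} = (\mathcal{D}_1,\ldots,\mathcal{D}_T) \in \underline{\mathcal{C}}(x)$ where every $\mathcal{D}_t$ is supported on $S$. Then $\mathsf{CalDist}(x,p) \le \|p - \mathcal{D}\|_1 + 4|S|$.
   Context: For $x \in \{0,1\}^T$, let $\mathcal{C}(x) = \{q \in [0,1]^T : \sum_{t=1}^T (x_t - q_t)\mathbf{1}[q_t = \alpha] = 0 \text{ for all } \alpha \in [0,1]\}$ and $\mathsf{CalDist}(x,p) = \min_{q \in \mathcal{C}(x)} \|p-q\|_1$. Let $\underline{\mathcal{C}}(x)$ be the set of $T$-tuples $\mathcal{D} = (\mathcal{D}_1,\ldots,\mathcal{D}_T)$ of probability distributions, each with finite support contained in $[0,1]$, such that $\sum_{t=1}^T (x_t - \alpha)\mathcal{D}_t(\alpha) = 0$ for every $\alpha \in [0,1]$. For such $\mathcal{D}$, $\|p - \mathcal{D}\|_1 = \sum_{t=1}^T \mathbb{E}_{q_t \sim \mathcal{D}_t}|p_t - q_t|$. *)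

theory Defs
  imports "HOL-Probability.Probability"
begin

text \<open>Sequences of length T are represented as functions on nat, indices 0..T-1.\<close>

definition cal_set :: "nat \<Rightarrow> (nat \<Rightarrow> real) \<Rightarrow> (nat \<Rightarrow> real) set" where
  "cal_set T x = {q. (\<forall>t<T. q t \<in> {0..1}) \<and>
      (\<forall>\<alpha>::real. (\<Sum>t<T. (x t - q t) * (if q t = \<alpha> then 1 else 0)) = 0)}"

definition l1dist :: "nat \<Rightarrow> (nat \<Rightarrow> real) \<Rightarrow> (nat \<Rightarrow> real) \<Rightarrow> real" where
  "l1dist T p q = (\<Sum>t<T. \<bar>p t - q t\<bar>)"

definition CalDist :: "nat \<Rightarrow> (nat \<Rightarrow> real) \<Rightarrow> (nat \<Rightarrow> real) \<Rightarrow> real" where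
  "CalDist T x p = Inf (l1dist T p ` cal_set T x)"

definition lower_cal_set :: "nat \<Rightarrow> (nat \<Rightarrow> real) \<Rightarrow> (nat \<Rightarrow> real pmf) set" where
  "lower_cal_set T x = {D. (\<forall>t<T. finite (set_pmf (D t)) \<and> set_pmf (D t) \<subseteq> {0..1}) \<and>
      (\<forall>\<alpha>::real. (\<Sum>t<T. (x t - \<alpha>) * pmf (D t) \<alpha>) = 0)}"

definition l1dist_pmf :: "nat \<Rightarrow> (nat \<Rightarrow> real) \<Rightarrow> (nat \<Rightarrow> real pmf) \<Rightarrow> real" where
  "l1dist_pmf T p D = (\<Sum>t<T. measure_pmf.expectation (D t) (\<lambda>q. \<bar>p t - q\<bar>))"

end

theory Submission
  imports Defs
begin
lemma lin_dep:
  fixes v :: "'k \<Rightarrow> 'a \<Rightarrow> real"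
  assumes "finite A"
  shows "finite K \<Longrightarrow> card K > card A \<Longrightarrow> \<exists>c. (\<exists>k\<in>K. c k \<noteq> 0) \<and> (\<forall>a\<in>A. (\<Sum>k\<in>K. c k * v k a) = 0)"
  using assms
proof (induction A arbitrary: K v rule: finite_induct)
  case empty
  then obtain k where "k \<in> K" by fastforce
  then show ?case by (intro exI[of _ "\<lambda>_. 1"]) auto
next
  case (insert a A)
  show ?case
  proof (cases "\<forall>k\<in>K. v k a = 0")
    case True
    have "\<exists>c. (\<exists>k\<in>K. c k \<noteq> 0) \<and> (\<forall>b\<in>A. (\<Sum>k\<in>K. c k * v k b) = 0)"
      using insert.IH[of K v] insert.prems insert.hyps by simp
    then obtain c where "(\<exists>k\<in>K. c k \<noteq> 0)" "(\<forall>b\<in>A. (\<Sum>k\<in>K. c k * v k b) = 0)" by blast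
    with True show ?thesis by (intro exI[of _ c]) auto
  next
    case False
    then obtain k0 where k0: "k0 \<in> K" "v k0 a \<noteq> 0" by auto
    define K' where "K' = K - {k0}"
    define w where "w k b = v k b - (v k a / v k0 a) * v k0 b" for k b
    have fK': "finite K'" using insert.prems K'_def by auto
    have "card K' > card A" using insert.prems insert.hyps k0 K'_def by (simp add: card_Diff_singleton)
    then obtain c' where c': "\<exists>k\<in>K'. c' k \<noteq> 0" "\<forall>b\<in>A. (\<Sum>k\<in>K'. c' k * w k b) = 0"
      using insert.IH[of K' w] fK' by blast
    have c'a: "(\<Sum>k\<in>K'. c' k * w k a) = 0" using k0 by (simp add: w_def)
    define c where "c k = (if k = k0 then - (\<Sum>j\<in>K'. c' j * v j a) / v k0 a else c' k)" for k
    show ?thesis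
    proof (intro exI[of _ c] conjI)
      show "\<exists>k\<in>K. c k \<noteq> 0" using c'(1) K'_def c_def by auto
      show "\<forall>b\<in>insert a A. (\<Sum>k\<in>K. c k * v k b) = 0"
      proof
        fix b assume b: "b \<in> insert a A"
        have 0: "(\<Sum>k\<in>K'. c' k * w k b) = 0" using b c'(2) c'a by auto
        have "(\<Sum>k\<in>K. c k * v k b) = c k0 * v k0 b + (\<Sum>k\<in>K'. c k * v k b)"
          using sum.remove[OF insert.prems(1) k0(1)] K'_def by simp
        also have "(\<Sum>k\<in>K'. c k * v k b) = (\<Sum>k\<in>K'. c' k * v k b)"
          by (rule sum.cong) (auto simp: c_def K'_def)
        also have "(\<Sum>k\<in>K'. c' k * v k b) = (\<Sum>k\<in>K'. c' k * w k b + (c' k * v k a) / v k0 a * v k0 b)"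
          by (rule sum.cong) (auto simp: w_def algebra_simps)
        also have "\<dots> = (\<Sum>k\<in>K'. c' k * w k b) + (\<Sum>k\<in>K'. c' k * v k a) / v k0 a * v k0 b"
          by (simp add: sum.distrib sum_distrib_right sum_divide_distrib)
        finally show "(\<Sum>k\<in>K. c k * v k b) = 0" using 0 by (simp add: c_def)
      qed
    qed
  qed
qed

definition feas :: "nat \<Rightarrow> (nat \<Rightarrow> real) \<Rightarrow> real set \<Rightarrow> (nat \<Rightarrow> real \<Rightarrow> real) \<Rightarrow> bool" where
  "feas T x S y \<longleftrightarrow> (\<forall>t<T. \<forall>a\<in>S. y t a \<ge> 0) \<and> (\<forall>t<T. (\<Sum>a\<in>S. y t a) = 1)
     \<and> (\<forall>a\<in>S. (\<Sum>t<T. y t a * (x t - a)) = 0)"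

definition lpcost :: "nat \<Rightarrow> (nat \<Rightarrow> real) \<Rightarrow> real set \<Rightarrow> (nat \<Rightarrow> real \<Rightarrow> real) \<Rightarrow> real" where
  "lpcost T p S y = (\<Sum>t<T. \<Sum>a\<in>S. y t a * \<bar>p t - a\<bar>)"

definition fracs :: "nat \<Rightarrow> real set \<Rightarrow> (nat \<Rightarrow> real \<Rightarrow> real) \<Rightarrow> nat set" where
  "fracs T S y = {t. t < T \<and> (\<forall>a\<in>S. y t a \<noteq> 1)}"

definition suppy :: "nat \<Rightarrow> real set \<Rightarrow> (nat \<Rightarrow> real \<Rightarrow> real) \<Rightarrow> (nat \<times> real) set" where
  "suppy T S y = {(t,a). t < T \<and> a \<in> S \<and> y t a \<noteq> 0}"

lemma two_pos:
  fixes y :: "real \<Rightarrow> real"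
  assumes "finite S" "\<forall>a\<in>S. y a \<ge> 0" "(\<Sum>a\<in>S. y a) = 1" "\<forall>a\<in>S. y a \<noteq> 1"
  shows "\<exists>a1 a2. a1 \<in> S \<and> a2 \<in> S \<and> a1 \<noteq> a2 \<and> y a1 > 0 \<and> y a2 > 0"
proof -
  obtain a1 where a1: "a1 \<in> S" "y a1 > 0"
  proof (rule ccontr)
    assume "\<not> thesis"
    then have "\<forall>a\<in>S. y a \<le> 0" using that by force
    then have "(\<Sum>a\<in>S. y a) \<le> 0" by (simp add: sum_nonpos)
    then show False using assms by simp
  qed
  have "y a1 \<le> 1" using member_le_sum[of a1 S y] assms a1 by simp
  then have lt: "y a1 < 1" using assms a1 by force
  have "(\<Sum>a\<in>S. y a) = y a1 + (\<Sum>a\<in>S-{a1}. y a)" using sum.remove[OF assms(1) a1(1)] by simp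
  then have "(\<Sum>a\<in>S-{a1}. y a) > 0" using lt assms by simp
  then obtain a2 where "a2 \<in> S - {a1}" "y a2 > 0"
    by (metis (no_types, lifting) DiffD1 assms(2) linorder_not_le sum_nonpos nle_le sum_nonneg)
  then show ?thesis using a1 by blast
qed

lemma step:
  assumes fS: "finite S" and F: "feas T x S y" and big: "card (fracs T S y) > card S"
  shows "\<exists>y'. feas T x S y' \<and> lpcost T p S y' \<le> lpcost T p S y \<and> card (suppy T S y') < card (suppy T S y)"
proof -
  define K where "K = fracs T S y"
  have KT: "K \<subseteq> {..<T}" by (auto simp: K_def fracs_def)
  have fK: "finite K" using KT finite_subset by blast
  have "\<forall>t\<in>K. \<exists>a1 a2. a1 \<in> S \<and> a2 \<in> S \<and> a1 \<noteq> a2 \<and> y t a1 > 0 \<and> y t a2 > 0"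
  proof
    fix t assume "t \<in> K"
    then show "\<exists>a1 a2. a1 \<in> S \<and> a2 \<in> S \<and> a1 \<noteq> a2 \<and> y t a1 > 0 \<and> y t a2 > 0"
      using two_pos[OF fS, of "y t"] F by (auto simp: K_def fracs_def feas_def)
  qed
  then obtain a1 a2 where A: "\<And>t. t \<in> K \<Longrightarrow> a1 t \<in> S \<and> a2 t \<in> S \<and> a1 t \<noteq> a2 t \<and> y t (a1 t) > 0 \<and> y t (a2 t) > 0"
    by metis
  define v where "v t b = (if b = a2 t then x t - b else 0) - (if b = a1 t then x t - b else 0)" for t b
  obtain c where c: "\<exists>k\<in>K. c k \<noteq> 0" "\<forall>b\<in>S. (\<Sum>k\<in>K. c k * v k b) = 0"
    using lin_dep[OF fS fK, of v] big K_def by blast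
  define z where "z t b = (if t \<in> K then c t * ((if b = a2 t then 1 else 0) - (if b = a1 t then 1 else 0)) else 0)" for t b
  have z1: "(\<Sum>b\<in>S. z t b) = 0" for t
  proof (cases "t \<in> K")
    case True
    then show ?thesis using A[OF True] fS by (simp add: z_def sum_subtractf right_diff_distrib sum_distrib_left[symmetric])
  qed (simp add: z_def)
  have z2: "(\<Sum>t<T. z t b * (x t - b)) = 0" if "b \<in> S" for b
  proof -
    have "(\<Sum>t<T. z t b * (x t - b)) = (\<Sum>t\<in>K. z t b * (x t - b))"
      by (rule sum.mono_neutral_right) (use KT in \<open>auto simp: z_def\<close>)
    also have "\<dots> = (\<Sum>k\<in>K. c k * v k b)"
      by (rule sum.cong) (auto simp: z_def v_def)
    finally show ?thesis using c(2) that by simp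
  qed
  have z3: "z t b \<noteq> 0 \<Longrightarrow> t \<in> K \<and> y t b > 0" for t b
    using A by (auto simp: z_def split: if_splits)
  define D' where "D' = (\<Sum>t<T. \<Sum>b\<in>S. z t b * \<bar>p t - b\<bar>)"
  define s :: real where "s = (if D' \<le> 0 then 1 else -1)"
  define w where "w t b = s * z t b" for t b
  have sD: "s * D' \<le> 0" by (simp add: s_def)
  obtain k where k: "k \<in> K" "c k \<noteq> 0" using c(1) by blast
  define P where "P = {(t,b). t < T \<and> b \<in> S \<and> w t b < 0}"
  have fP: "finite P"
    by (rule finite_subset[of _ "{..<T} \<times> S"]) (auto simp: P_def fS)
  have "P \<noteq> {}"
  proof (cases "s * c k > 0")
    case True
    then have "(k, a1 k) \<in> P" using A[OF k(1)] k KT by (auto simp: P_def w_def z_def)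
    then show ?thesis by blast
  next
    case False
    then have "s * c k < 0" using k(2) by (auto simp: s_def)
    then have "(k, a2 k) \<in> P" using A[OF k(1)] k KT by (auto simp: P_def w_def z_def)
    then show ?thesis by blast
  qed
  define r where "r = (\<lambda>(t,b). y t b / (- w t b))"
  define lam where "lam = Min (r ` P)"
  have lamin: "lam \<in> r ` P" unfolding lam_def using fP \<open>P \<noteq> {}\<close> by (intro Min_in) auto
  then obtain t0 b0 where tb0: "(t0,b0) \<in> P" "lam = y t0 b0 / (- w t0 b0)" by (auto simp: r_def)
  have lamle: "lam \<le> y t b / (- w t b)" if "(t,b) \<in> P" for t b
    unfolding lam_def using fP that by (force intro: Min_le simp: r_def)
  have ynn: "y t b \<ge> 0" if "t < T" "b \<in> S" for t b using F that by (simp add: feas_def)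
  have lam0: "lam \<ge> 0" using tb0 ynn using divide_nonneg_neg[of "y t0 b0" "w t0 b0"] by (auto simp: P_def)
  define y' where "y' t b = y t b + lam * w t b" for t b
  have feas': "feas T x S y'"
    unfolding feas_def
  proof (intro conjI allI ballI impI)
    fix t b assume tb: "t < T" "b \<in> S"
    show "0 \<le> y' t b"
    proof (cases "w t b < 0")
      case True
      then have tbP: "(t,b) \<in> P" using tb by (simp add: P_def)
      have h: "lam \<le> y t b / (- w t b)" by (rule lamle[OF tbP])
      have "lam * (- w t b) \<le> y t b / (- w t b) * (- w t b)" using mult_right_mono[OF h, of "- w t b"] True by simp
      then have "lam * (- w t b) \<le> y t b" using True by simp
      then show ?thesis by (simp add: y'_def)
    next
      case False
      then show ?thesis using lam0 ynn[OF tb] by (simp add: y'_def)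
    qed
  next
    fix t assume "t < T"
    have "(\<Sum>b\<in>S. y' t b) = (\<Sum>b\<in>S. y t b) + lam * s * (\<Sum>b\<in>S. z t b)"
      by (simp add: y'_def w_def sum.distrib sum_distrib_left mult.assoc)
    then show "(\<Sum>b\<in>S. y' t b) = 1" using F \<open>t < T\<close> z1 by (simp add: feas_def)
  next
    fix b assume "b \<in> S"
    have "(\<Sum>t<T. y' t b * (x t - b)) = (\<Sum>t<T. y t b * (x t - b)) + lam * s * (\<Sum>t<T. z t b * (x t - b))"
      by (simp add: y'_def w_def sum.distrib sum_distrib_left distrib_right mult.assoc)
    then show "(\<Sum>t<T. y' t b * (x t - b)) = 0" using F \<open>b \<in> S\<close> z2 by (simp add: feas_def)
  qed
  have "lpcost T p S y' = lpcost T p S y + lam * (s * D')"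
    by (simp add: lpcost_def D'_def y'_def w_def sum.distrib sum_distrib_left distrib_right mult.assoc)
  moreover have "lam * (s * D') \<le> 0" using lam0 sD by (simp add: mult_nonneg_nonpos)
  ultimately have cost: "lpcost T p S y' \<le> lpcost T p S y" by simp
  have sub: "suppy T S y' \<subseteq> suppy T S y"
  proof
    fix tb assume "tb \<in> suppy T S y'"
    then obtain t b where tb: "tb = (t,b)" "t < T" "b \<in> S" "y' t b \<noteq> 0" by (auto simp: suppy_def)
    show "tb \<in> suppy T S y"
    proof (rule ccontr)
      assume "tb \<notin> suppy T S y"
      then have "y t b = 0" using tb by (auto simp: suppy_def)
      then have "z t b = 0" using z3 by force
      then show False using tb \<open>y t b = 0\<close> by (simp add: y'_def w_def)
    qed
  qed
  have w0: "w t0 b0 < 0" using tb0 by (simp add: P_def)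
  then have "z t0 b0 \<noteq> 0" by (auto simp: w_def)
  then have ypos: "y t0 b0 > 0" using z3 by blast
  have "y' t0 b0 = 0" using tb0(2) w0 by (simp add: y'_def)
  then have "(t0,b0) \<in> suppy T S y - suppy T S y'" using tb0(1) ypos by (auto simp: suppy_def P_def)
  then have "suppy T S y' \<subset> suppy T S y" using sub by blast
  moreover have "finite (suppy T S y)"
    by (rule finite_subset[of _ "{..<T} \<times> S"]) (auto simp: suppy_def fS)
  ultimately have "card (suppy T S y') < card (suppy T S y)" by (rule psubset_card_mono[rotated])
  then show ?thesis using feas' cost by blast
qed

lemma vertex:
  assumes fS: "finite S"
  shows "feas T x S y0 \<Longrightarrow> \<exists>y. feas T x S y \<and> lpcost T p S y \<le> lpcost T p S y0 \<and> card (fracs T S y) \<le> card S"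
proof (induction "card (suppy T S y0)" arbitrary: y0 rule: less_induct)
  case less
  show ?case
  proof (cases "card (fracs T S y0) \<le> card S")
    case True
    then show ?thesis using less.prems by blast
  next
    case False
    then obtain y' where y': "feas T x S y'" "lpcost T p S y' \<le> lpcost T p S y0" "card (suppy T S y') < card (suppy T S y0)"
      using step[OF fS less.prems, of p] by auto
    from less.hyps[OF y'(3) y'(1)] y'(2) show ?thesis by force
  qed
qed

lemma construct:
  fixes g :: "nat \<Rightarrow> real"
  assumes fS: "finite S" and gS: "\<forall>t<T. g t \<in> S" and x01: "\<forall>t<T. x t \<in> {0, 1}"
  shows "\<exists>q \<in> cal_set T x. l1dist T p q \<le> (\<Sum>t<T. \<bar>p t - g t\<bar>)
           + (\<Sum>a\<in>S. \<bar>\<Sum>t<T. (if g t = a then x t - a else 0)\<bar>)"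
proof -
  define G where "G a = {t. t \<in> {..<T} \<and> g t = a}" for a
  have fG: "finite (G a)" for a by (auto simp: G_def)
  define cnt where "cnt a = real (card (G a))" for a
  define sx where "sx a = (\<Sum>t\<in>G a. x t)" for a
  define avg where "avg a = sx a / cnt a" for a
  define q where "q t = avg (g t)" for t
  have sx_nn: "0 \<le> sx a" for a unfolding sx_def
    by (rule sum_nonneg) (use x01 in \<open>auto simp: G_def\<close>)
  have sx_le: "sx a \<le> cnt a" for a
  proof -
    have "sx a \<le> (\<Sum>t\<in>G a. 1)" unfolding sx_def
      by (rule sum_mono) (use x01 in \<open>auto simp: G_def\<close>)
    then show ?thesis by (simp add: cnt_def)
  qed
  have cntavg: "cnt a * avg a = sx a" for a
  proof (cases "cnt a = 0")
    case True
    then have "G a = {}" using fG by (simp add: cnt_def)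
    then show ?thesis using True by (simp add: sx_def avg_def)
  qed (simp add: avg_def)
  have avg01: "avg a \<in> {0..1}" for a
    using sx_nn[of a] sx_le[of a] by (auto simp: avg_def divide_le_eq_1 cnt_def)
  have grp: "(\<Sum>t<T. f t) = (\<Sum>a\<in>S. \<Sum>t\<in>G a. f t)" for f :: "nat \<Rightarrow> real"
    unfolding G_def by (rule sum.group[symmetric]) (use fS gS in auto)
  have Ea: "(\<Sum>t<T. (if g t = a then x t - a else 0)) = sx a - cnt a * a" for a
  proof -
    have "(\<Sum>t<T. (if g t = a then x t - a else 0)) = (\<Sum>t\<in>G a. x t - a)"
      unfolding G_def by (rule sum.inter_filter[symmetric]) simp
    then show ?thesis by (simp add: sum_subtractf sx_def cnt_def)
  qed
  have qcal: "q \<in> cal_set T x"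
    unfolding cal_set_def
  proof (intro CollectI conjI allI impI)
    fix t show "q t \<in> {0..1}" using avg01 by (simp add: q_def)
  next
    fix \<beta> :: real
    have "(\<Sum>t<T. (x t - q t) * (if q t = \<beta> then 1 else 0))
        = (\<Sum>a\<in>S. \<Sum>t\<in>G a. (x t - q t) * (if q t = \<beta> then 1 else 0))" by (rule grp)
    also have "\<dots> = (\<Sum>a\<in>S. (if avg a = \<beta> then 1 else 0) * (\<Sum>t\<in>G a. (x t - avg a)))"
    proof (rule sum.cong[OF refl])
      fix a
      have "(\<Sum>t\<in>G a. (x t - q t) * (if q t = \<beta> then 1 else 0))
          = (\<Sum>t\<in>G a. (if avg a = \<beta> then 1 else 0) * (x t - avg a))"
        by (rule sum.cong) (auto simp: G_def q_def)
      then show "(\<Sum>t\<in>G a. (x t - q t) * (if q t = \<beta> then 1 else 0))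
          = (if avg a = \<beta> then 1 else 0) * (\<Sum>t\<in>G a. (x t - avg a))"
        by (simp add: sum_distrib_left)
    qed
    also have "\<dots> = 0"
      by (rule sum.neutral) (simp add: sum_subtractf sx_def[symmetric] cnt_def[symmetric] cntavg)
    finally show "(\<Sum>t<T. (x t - q t) * (if q t = \<beta> then 1 else 0)) = 0" .
  qed
  have "l1dist T p q \<le> (\<Sum>t<T. \<bar>p t - g t\<bar> + \<bar>g t - q t\<bar>)"
    unfolding l1dist_def by (rule sum_mono) linarith
  also have "\<dots> = (\<Sum>t<T. \<bar>p t - g t\<bar>) + (\<Sum>t<T. \<bar>g t - q t\<bar>)" by (simp add: sum.distrib)
  also have "(\<Sum>t<T. \<bar>g t - q t\<bar>) = (\<Sum>a\<in>S. \<Sum>t\<in>G a. \<bar>g t - q t\<bar>)" by (rule grp)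
  also have "\<dots> = (\<Sum>a\<in>S. cnt a * \<bar>a - avg a\<bar>)"
    by (rule sum.cong[OF refl]) (simp add: cnt_def G_def q_def)
  also have "\<dots> = (\<Sum>a\<in>S. \<bar>\<Sum>t<T. (if g t = a then x t - a else 0)\<bar>)"
  proof (rule sum.cong[OF refl])
    fix a
    have "cnt a * \<bar>a - avg a\<bar> = \<bar>cnt a * a - cnt a * avg a\<bar>"
      by (simp add: cnt_def abs_mult right_diff_distrib[symmetric])
    then show "cnt a * \<bar>a - avg a\<bar> = \<bar>\<Sum>t<T. (if g t = a then x t - a else 0)\<bar>"
      by (simp add: Ea cntavg abs_minus_commute)
  qed
  finally show ?thesis using qcal by blast
qed

lemma int_row:
  fixes y :: "real \<Rightarrow> real"
  assumes "finite S" "\<forall>b\<in>S. y b \<ge> 0" "(\<Sum>b\<in>S. y b) = 1" "a \<in> S" "y a = 1" "b \<in> S" "b \<noteq> a"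
  shows "y b = 0"
proof -
  have "(\<Sum>b\<in>S. y b) = y a + (\<Sum>b\<in>S-{a}. y b)" using sum.remove[OF assms(1,4)] by simp
  then have "(\<Sum>b\<in>S-{a}. y b) = 0" using assms by simp
  then have "\<forall>b\<in>S-{a}. y b = 0" using sum_nonneg_eq_0_iff[of "S-{a}" y] assms by auto
  then show ?thesis using assms by auto
qed

lemma rounding:
  assumes fS: "finite S" and S01: "S \<subseteq> {0..1}" and F: "feas T x S y"
    and x01: "\<forall>t<T. x t \<in> {0, 1}" and p01: "\<forall>t<T. p t \<in> {0..1}"
  shows "\<exists>g. (\<forall>t<T. g t \<in> S) \<and>
    (\<Sum>t<T. \<bar>p t - g t\<bar>) \<le> lpcost T p S y + card (fracs T S y) \<and>
    (\<Sum>a\<in>S. \<bar>\<Sum>t<T. (if g t = a then x t - a else 0)\<bar>) \<le> 2 * card (fracs T S y)"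
proof -
  define Fr where "Fr = fracs T S y"
  have FrT: "Fr \<subseteq> {..<T}" by (auto simp: Fr_def fracs_def)
  have ynn: "\<forall>a\<in>S. y t a \<ge> 0" and ysum: "(\<Sum>a\<in>S. y t a) = 1" if "t < T" for t
    using F that by (auto simp: feas_def)
  define g where "g t = (SOME a. a \<in> S \<and> y t a > 0)" for t
  have gS: "g t \<in> S \<and> y t (g t) > 0" if "t < T" for t
  proof -
    have "\<exists>a. a \<in> S \<and> y t a > 0"
    proof (rule ccontr)
      assume "\<not> ?thesis"
      then have "(\<Sum>a\<in>S. y t a) \<le> 0" by (intro sum_nonpos) auto
      then show False using ysum[OF that] by simp
    qed
    then show ?thesis unfolding g_def by (rule someI_ex)
  qed
  have ind: "(if g t = a then 1 else 0) = y t a" if tt: "t < T" "t \<notin> Fr" "a \<in> S" for t a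
  proof -
    obtain a0 where a0: "a0 \<in> S" "y t a0 = 1" using tt by (auto simp: Fr_def fracs_def)
    have oth: "y t b = 0" if "b \<in> S" "b \<noteq> a0" for b
      using int_row[OF fS ynn[OF \<open>t<T\<close>] ysum[OF \<open>t<T\<close>] a0 that] .
    have "g t = a0" using gS[OF tt(1)] oth by force
    then show ?thesis using a0 oth tt by auto
  qed
  have fFr: "finite Fr" using FrT finite_subset by blast
  have cardsum: "(\<Sum>t<T. (if t \<in> Fr then c else 0)) = c * card Fr" for c :: real
  proof -
    have "(\<Sum>t<T. (if t \<in> Fr then c else 0)) = (\<Sum>t\<in>{t\<in>{..<T}. t \<in> Fr}. c)"
      by (rule sum.inter_filter[symmetric]) simp
    also have "{t\<in>{..<T}. t \<in> Fr} = Fr" using FrT by auto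
    finally have "(\<Sum>t<T. (if t \<in> Fr then c else 0)) = (\<Sum>t\<in>Fr. c)" .
    then show ?thesis by simp
  qed
  have c1: "\<bar>p t - g t\<bar> \<le> (\<Sum>a\<in>S. y t a * \<bar>p t - a\<bar>) + (if t \<in> Fr then 1 else 0)" if "t < T" for t
  proof (cases "t \<in> Fr")
    case True
    have "g t \<in> {0..1}" using gS[OF that] S01 by auto
    then have "\<bar>p t - g t\<bar> \<le> 1" using p01 that by auto
    moreover have "(\<Sum>a\<in>S. y t a * \<bar>p t - a\<bar>) \<ge> 0" using ynn[OF that] by (intro sum_nonneg) auto
    ultimately show ?thesis using True by simp
  next
    case False
    have "(\<Sum>a\<in>S. y t a * \<bar>p t - a\<bar>) = (\<Sum>a\<in>S. (if g t = a then 1 else 0) * \<bar>p t - a\<bar>)"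
      using ind[OF that False] by simp
    also have "\<dots> = \<bar>p t - g t\<bar>" proof -
      have "(\<Sum>a\<in>S. (if g t = a then 1 else 0) * \<bar>p t - a\<bar>) = (\<Sum>a\<in>S. if g t = a then \<bar>p t - a\<bar> else 0)"
        by (rule sum.cong) auto
      then show ?thesis using gS[OF that] fS by (simp add: sum.delta')
    qed
    finally show ?thesis using False by simp
  qed
  have cost: "(\<Sum>t<T. \<bar>p t - g t\<bar>) \<le> lpcost T p S y + card Fr"
  proof -
    have "(\<Sum>t<T. \<bar>p t - g t\<bar>) \<le> (\<Sum>t<T. (\<Sum>a\<in>S. y t a * \<bar>p t - a\<bar>) + (if t \<in> Fr then 1 else 0))"
      by (rule sum_mono) (use c1 in auto)
    also have "\<dots> = lpcost T p S y + card Fr" by (simp add: sum.distrib lpcost_def cardsum)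
    finally show ?thesis .
  qed
  define e where "e t a = ((if g t = a then 1 else 0) - y t a) * (x t - a)" for t a
  have Eeq: "(\<Sum>t<T. (if g t = a then x t - a else 0)) = (\<Sum>t<T. e t a)" if "a \<in> S" for a
  proof -
    have "(\<Sum>t<T. e t a) = (\<Sum>t<T. (if g t = a then x t - a else 0)) - (\<Sum>t<T. y t a * (x t - a))"
      unfolding sum_subtractf[symmetric] by (rule sum.cong) (auto simp: e_def left_diff_distrib)
    then show ?thesis using F that by (simp add: feas_def)
  qed
  have et: "(\<Sum>a\<in>S. \<bar>e t a\<bar>) \<le> (if t \<in> Fr then 2 else 0)" if "t < T" for t
  proof (cases "t \<in> Fr")
    case True
    have "(\<Sum>a\<in>S. \<bar>e t a\<bar>) \<le> (\<Sum>a\<in>S. (if g t = a then 1 else 0) + y t a)"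
    proof (rule sum_mono)
      fix a assume a: "a \<in> S"
      have "a \<in> {0..1}" using a S01 by auto
      then have "\<bar>x t - a\<bar> \<le> 1" using x01 that by auto
      moreover have "\<bar>(if g t = a then 1 else 0) - y t a\<bar> \<le> (if g t = a then 1 else 0) + y t a"
        using ynn[OF that] a by auto
      ultimately show "\<bar>e t a\<bar> \<le> (if g t = a then 1 else 0) + y t a"
        unfolding e_def abs_mult
        by (metis (no_types, lifting) abs_ge_zero dual_order.trans mult_left_le mult_right_mono)
    qed
    also have "\<dots> = 2" using gS[OF that] fS ysum[OF that] by (simp add: sum.distrib sum.delta')
    finally show ?thesis using True by simp
  next
    case False
    then show ?thesis using ind[OF that False] by (simp add: e_def)
  qed
  have "(\<Sum>a\<in>S. \<bar>\<Sum>t<T. (if g t = a then x t - a else 0)\<bar>) \<le> (\<Sum>a\<in>S. \<Sum>t<T. \<bar>e t a\<bar>)"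
    by (rule sum_mono) (simp add: Eeq sum_abs)
  also have "\<dots> = (\<Sum>t<T. \<Sum>a\<in>S. \<bar>e t a\<bar>)" by (rule sum.swap)
  also have "\<dots> \<le> (\<Sum>t<T. (if t \<in> Fr then 2 else 0))" by (rule sum_mono) (use et in auto)
  also have "\<dots> = 2 * card Fr" by (simp add: cardsum)
  finally show ?thesis using cost gS Fr_def by blast
qed

theorem lemma2:
  fixes T :: nat and x p :: "nat \<Rightarrow> real" and S :: "real set" and D :: "nat \<Rightarrow> real pmf"
  assumes "T > 0"
    and "\<forall>t<T. x t \<in> {0, 1}"
    and "\<forall>t<T. p t \<in> {0..1}"
    and "finite S" and "S \<subseteq> {0..1}"
    and "D \<in> lower_cal_set T x"
    and "\<forall>t<T. set_pmf (D t) \<subseteq> S"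
  shows "CalDist T x p \<le> l1dist_pmf T p D + 4 * real (card S)"
proof -
  define y0 where "y0 t a = pmf (D t) a" for t a
  have F0: "feas T x S y0"
    unfolding feas_def y0_def
  proof (intro conjI allI impI ballI)
    fix t assume "t < T"
    then show "(\<Sum>a\<in>S. pmf (D t) a) = 1" using sum_pmf_eq_1[OF assms(4)] assms(7) by blast
  next
    fix a
    have "(\<Sum>t<T. (x t - a) * pmf (D t) a) = 0" using assms(6) by (simp add: lower_cal_set_def)
    then show "(\<Sum>t<T. pmf (D t) a * (x t - a)) = 0" by (simp add: mult.commute)
  qed simp
  have cost0: "lpcost T p S y0 = l1dist_pmf T p D"
    unfolding lpcost_def l1dist_pmf_def y0_def
  proof (rule sum.cong[OF refl])
    fix t assume "t \<in> {..<T}"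
    then have "set_pmf (D t) \<subseteq> S" using assms(7) by simp
    then have "measure_pmf.expectation (D t) (\<lambda>q. \<bar>p t - q\<bar>) = (\<Sum>a\<in>S. \<bar>p t - a\<bar> * pmf (D t) a)"
      by (intro integral_measure_pmf_real[OF assms(4)]) auto
    then show "(\<Sum>a\<in>S. pmf (D t) a * \<bar>p t - a\<bar>) = measure_pmf.expectation (D t) (\<lambda>q. \<bar>p t - q\<bar>)"
      by (simp add: mult.commute)
  qed
  obtain y where y: "feas T x S y" "lpcost T p S y \<le> lpcost T p S y0" "card (fracs T S y) \<le> card S"
    using vertex[OF assms(4) F0] by blast
  obtain g where g: "\<forall>t<T. g t \<in> S" "(\<Sum>t<T. \<bar>p t - g t\<bar>) \<le> lpcost T p S y + card (fracs T S y)"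
    "(\<Sum>a\<in>S. \<bar>\<Sum>t<T. (if g t = a then x t - a else 0)\<bar>) \<le> 2 * card (fracs T S y)"
    using rounding[OF assms(4,5) y(1) assms(2,3)] by blast
  obtain q where q: "q \<in> cal_set T x" "l1dist T p q \<le> (\<Sum>t<T. \<bar>p t - g t\<bar>)
           + (\<Sum>a\<in>S. \<bar>\<Sum>t<T. (if g t = a then x t - a else 0)\<bar>)"
    using construct[OF assms(4) g(1) assms(2)] by blast
  have "CalDist T x p \<le> l1dist T p q"
    unfolding CalDist_def
  proof (rule cInf_lower)
    show "l1dist T p q \<in> l1dist T p ` cal_set T x" using q(1) by blast
    show "bdd_below (l1dist T p ` cal_set T x)"
      by (rule bdd_belowI[of _ 0]) (auto simp: l1dist_def intro: sum_nonneg)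
  qed
  also have "\<dots> \<le> l1dist_pmf T p D + 4 * real (card S)"
    using q(2) g(2,3) y(2,3) cost0 by linarith
  finally show ?thesis .
qed

end
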